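(* For every positive integer $m$ there exists a circle graph with $m^2$ vertices whose rank-width is at least $m/4$ (namely the $m\times m$ comparability grid). In particular, there is no upper bound on the rank-width of $n$-vertex circle graphs of order $o(\sqrt n)$.
   Context: A circle graph is a graph isomorphic to the intersection graph of finitely many chords of a circle. The $m\times m$ comparability grid is the simple graph on $\{1,\dots,m\}^2$ with distinct $(i,j),(i',j')$ adjacent iff ($i\le i'$ and $j\le j'$) or ($i\ge i'$ and $j\ge j'$); it is a circle graph. For $X\subseteq V(G)$, the cut-rank $r(X)$ is the $\mathrm{GF}(2)$-rank of the adjacency submatrix with rows $X$ and columns $V(G)\setminus X$. A rank-decomposition is a tree with all degrees in $\{1,3\}$ whose leaves are in bijection with $V(G)$; each tree edge $e$ induces a bipartition $(X_e,Y_e)$ of $V(G)$ of width $r(X_e)$; rank-width is the minimum over rank-decompositions of the maximum edge width. *)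

theory Defs
  imports "HOL-Analysis.Analysis" "HOL-Library.Landau_Symbols"
begin

text \<open>A graph is a finite vertex set V with a symmetric irreflexive adjacency relation E
  (only its restriction to V matters).\<close>

definition simple_graph :: "'a set \<Rightarrow> ('a \<Rightarrow> 'a \<Rightarrow> bool) \<Rightarrow> bool" where
  "simple_graph V E \<longleftrightarrow> finite V \<and> (\<forall>x y. E x y \<longrightarrow> E y x) \<and> (\<forall>x. \<not> E x x)"

text \<open>G is a circle graph iff it is isomorphic to the
  intersection graph of finitely many (pairwise distinct) chords.\<close>

definition circle_graph :: "'a set \<Rightarrow> ('a \<Rightarrow> 'a \<Rightarrow> bool) \<Rightarrow> bool" where
  "circle_graph V E \<longleftrightarrow> simple_graph V E \<and>
     (\<exists>a b :: 'a \<Rightarrow> complex.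
        (\<forall>v\<in>V. norm (a v) = 1 \<and> norm (b v) = 1 \<and> a v \<noteq> b v) \<and>
        inj_on (\<lambda>v. closed_segment (a v) (b v)) V \<and>
        (\<forall>v\<in>V. \<forall>w\<in>V. v \<noteq> w \<longrightarrow>
            (E v w \<longleftrightarrow> closed_segment (a v) (b v) \<inter> closed_segment (a w) (b w) \<noteq> {})))"

definition comp_grid_V :: "nat \<Rightarrow> (nat \<times> nat) set" where
  "comp_grid_V m = {1..m} \<times> {1..m}"

definition comp_grid_E :: "(nat \<times> nat) \<Rightarrow> (nat \<times> nat) \<Rightarrow> bool" where
  "comp_grid_E p q \<longleftrightarrow> p \<noteq> q \<and>
     ((fst p \<le> fst q \<and> snd p \<le> snd q) \<or> (fst p \<ge> fst q \<and> snd p \<ge> snd q))"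

text \<open>A set S of rows (indexed by vertices of X) of the X \<times> (V - X) adjacency matrix is
  linearly independent over GF(2) iff no nonempty subset of them sums to the zero vector,
  i.e. for each nonempty T \<subseteq> S some column y has an odd number of ones among the rows in T.\<close>

definition gf2_indep_rows :: "'a set \<Rightarrow> ('a \<Rightarrow> 'a \<Rightarrow> bool) \<Rightarrow> 'a set \<Rightarrow> 'a set \<Rightarrow> bool" where
  "gf2_indep_rows V E X S \<longleftrightarrow> S \<subseteq> X \<and>
     (\<forall>T. T \<subseteq> S \<longrightarrow> T \<noteq> {} \<longrightarrow> (\<exists>y \<in> V - X. odd (card {x\<in>T. E x y})))"

definition cut_rank :: "'a set \<Rightarrow> ('a \<Rightarrow> 'a \<Rightarrow> bool) \<Rightarrow> 'a set \<Rightarrow> nat" where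
  "cut_rank V E X = Max (card ` {S. gf2_indep_rows V E X S})"

definition tree_edges :: "nat set \<Rightarrow> (nat \<Rightarrow> nat \<Rightarrow> bool) \<Rightarrow> nat set set" where
  "tree_edges N T = {{s, t} | s t. s \<in> N \<and> t \<in> N \<and> T s t}"

definition is_tree :: "nat set \<Rightarrow> (nat \<Rightarrow> nat \<Rightarrow> bool) \<Rightarrow> bool" where
  "is_tree N T \<longleftrightarrow> finite N \<and> N \<noteq> {} \<and>
     (\<forall>s t. T s t \<longrightarrow> T t s) \<and> (\<forall>s. \<not> T s s) \<and> (\<forall>s t. T s t \<longrightarrow> s \<in> N \<and> t \<in> N) \<and>
     (\<forall>s\<in>N. \<forall>t\<in>N. T\<^sup>*\<^sup>* s t) \<and>
     card (tree_edges N T) = card N - 1"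

definition tree_degree :: "nat set \<Rightarrow> (nat \<Rightarrow> nat \<Rightarrow> bool) \<Rightarrow> nat \<Rightarrow> nat" where
  "tree_degree N T s = card {t\<in>N. T s t}"

definition tree_leaves :: "nat set \<Rightarrow> (nat \<Rightarrow> nat \<Rightarrow> bool) \<Rightarrow> nat set" where
  "tree_leaves N T = {s\<in>N. tree_degree N T s = 1}"

definition rank_decomposition ::
  "'a set \<Rightarrow> nat set \<Rightarrow> (nat \<Rightarrow> nat \<Rightarrow> bool) \<Rightarrow> ('a \<Rightarrow> nat) \<Rightarrow> bool" where
  "rank_decomposition V N T L \<longleftrightarrow> is_tree N T \<and>
     (\<forall>s\<in>N. tree_degree N T s \<in> {1, 3}) \<and> bij_betw L V (tree_leaves N T)"

text \<open>The side X_e of the bipartition induced by tree edge e = st: the vertices whose leaves lie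
  in the component of s after deleting e.\<close>

definition edge_side :: "'a set \<Rightarrow> (nat \<Rightarrow> nat \<Rightarrow> bool) \<Rightarrow> ('a \<Rightarrow> nat) \<Rightarrow> nat \<Rightarrow> nat \<Rightarrow> 'a set" where
  "edge_side V T L s t =
     {v\<in>V. (\<lambda>x y. T x y \<and> {x, y} \<noteq> {s, t})\<^sup>*\<^sup>* s (L v)}"

definition decomposition_width ::
  "'a set \<Rightarrow> ('a \<Rightarrow> 'a \<Rightarrow> bool) \<Rightarrow> nat set \<Rightarrow> (nat \<Rightarrow> nat \<Rightarrow> bool) \<Rightarrow> ('a \<Rightarrow> nat) \<Rightarrow> nat" where
  "decomposition_width V E N T L =
     Max ({0} \<union> {cut_rank V E (edge_side V T L s t) | s t. s \<in> N \<and> t \<in> N \<and> T s t})"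

text \<open>Rank-width: minimum width over all rank-decompositions. Graphs with at most one vertex
  have no rank-decomposition; by the standard convention their rank-width is 0.\<close>

definition rank_width :: "'a set \<Rightarrow> ('a \<Rightarrow> 'a \<Rightarrow> bool) \<Rightarrow> nat" where
  "rank_width V E = (if card V \<le> 1 then 0 else
     (LEAST k. \<exists>N T L. rank_decomposition V N T L \<and> decomposition_width V E N T L = k))"

end

theory Submission
  imports Defs "HOL-Library.Nat_Bijection"
begin


definition orient :: "complex \<Rightarrow> complex \<Rightarrow> complex \<Rightarrow> real" where
  "orient A B C = (Re B - Re A) * (Im C - Im A) - (Im B - Im A) * (Re C - Re A)"

lemma orient_comb:
  "orient C D ((1 - u) *\<^sub>R A + u *\<^sub>R B) = (1 - u) * orient C D A + u * orient C D B"
  by (simp add: orient_def algebra_simps)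

lemma orient_on: "orient C D ((1 - v) *\<^sub>R C + v *\<^sub>R D) = 0"
  by (simp add: orient_def algebra_simps)

lemma seg_disj:
  assumes "orient C D A * orient C D B > 0"
  shows "closed_segment A B \<inter> closed_segment C D = {}"
proof (rule ccontr)
  assume "closed_segment A B \<inter> closed_segment C D \<noteq> {}"
  then obtain z where z1: "z \<in> closed_segment A B" and z2: "z \<in> closed_segment C D" by blast
  from z1 obtain u where u: "0 \<le> u" "u \<le> 1" "z = (1 - u) *\<^sub>R A + u *\<^sub>R B"
    by (auto simp: in_segment)
  from z2 obtain v where v: "z = (1 - v) *\<^sub>R C + v *\<^sub>R D"
    by (auto simp: in_segment)
  have "orient C D z = 0" using v orient_on by simp
  hence e: "(1 - u) * orient C D A + u * orient C D B = 0" using u orient_comb by simp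
  show False
  proof (cases "orient C D A > 0")
    case True
    hence "orient C D B > 0" using assms by (simp add: zero_less_mult_iff)
    moreover have "(1 - u) * orient C D A \<ge> 0" using True u by simp
    moreover have "u * orient C D B \<ge> 0" using calculation u by simp
    ultimately show False using e True u
      by (smt (verit) mult_pos_pos)
  next
    case False
    hence a: "orient C D A < 0" "orient C D B < 0" using assms by (auto simp: zero_less_mult_iff)
    have "(1 - u) * orient C D A \<le> 0" using a u by (simp add: mult_nonneg_nonpos)
    moreover have "u * orient C D B \<le> 0" using a u by (simp add: mult_nonneg_nonpos)
    ultimately show False using e a u
      by (smt (verit) mult_pos_neg)
  qed
qed

lemma lines_unique:
  assumes "orient A B z = 0" "orient A B w = 0" "orient C D z = 0" "orient C D w = 0"
    and "orient A B D - orient A B C \<noteq> 0"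
  shows "z = w"
proof -
  define e1 where "e1 = Re B - Re A"
  define e2 where "e2 = Im B - Im A"
  define f1 where "f1 = Re D - Re C"
  define f2 where "f2 = Im D - Im C"
  define d1 where "d1 = Re z - Re w"
  define d2 where "d2 = Im z - Im w"
  have h1: "e1 * d2 - e2 * d1 = 0" using assms(1,2) unfolding orient_def e1_def e2_def d1_def d2_def
    by (simp add: algebra_simps)
  have h2: "f1 * d2 - f2 * d1 = 0" using assms(3,4) unfolding orient_def f1_def f2_def d1_def d2_def
    by (simp add: algebra_simps)
  have det: "e1 * f2 - e2 * f1 \<noteq> 0" using assms(5) unfolding orient_def e1_def e2_def f1_def f2_def
    by (simp add: algebra_simps)
  have "(e1 * f2 - e2 * f1) * d2 = f2 * (e1 * d2 - e2 * d1) - e2 * (f1 * d2 - f2 * d1)"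
    by (simp add: algebra_simps)
  hence "d2 = 0" using h1 h2 det by simp
  have "(e1 * f2 - e2 * f1) * d1 = f1 * (e1 * d2 - e2 * d1) - e1 * (f1 * d2 - f2 * d1)"
    by (simp add: algebra_simps)
  hence "d1 = 0" using h1 h2 det by simp
  show ?thesis using \<open>d1 = 0\<close> \<open>d2 = 0\<close> unfolding d1_def d2_def by (simp add: complex_eq_iff)
qed

lemma frac_unit:
  fixes p q :: real
  assumes "p * q < 0"
  shows "0 \<le> p / (p - q)" "p / (p - q) \<le> 1" "(1 - p / (p - q)) * p + p / (p - q) * q = 0"
proof -
  have "p \<noteq> q" using assms by auto
  hence nz: "p - q \<noteq> 0" by simp
  show "0 \<le> p / (p - q)" using assms
    by (cases "p > 0") (auto simp: mult_less_0_iff divide_simps)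
  show "p / (p - q) \<le> 1" using assms
    by (cases "p > 0") (auto simp: mult_less_0_iff divide_simps)
  show "(1 - p / (p - q)) * p + p / (p - q) * q = 0" using nz
    by (simp add: field_simps)
qed

lemma seg_int:
  assumes "orient C D A * orient C D B < 0" "orient A B C * orient A B D < 0"
  shows "closed_segment A B \<inter> closed_segment C D \<noteq> {}"
proof -
  define u where "u = orient C D A / (orient C D A - orient C D B)"
  define v where "v = orient A B C / (orient A B C - orient A B D)"
  define z where "z = (1 - u) *\<^sub>R A + u *\<^sub>R B"
  define w where "w = (1 - v) *\<^sub>R C + v *\<^sub>R D"
  have u: "0 \<le> u" "u \<le> 1" "(1 - u) * orient C D A + u * orient C D B = 0"
    using frac_unit[OF assms(1)] unfolding u_def by auto
  have v: "0 \<le> v" "v \<le> 1" "(1 - v) * orient A B C + v * orient A B D = 0"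
    using frac_unit[OF assms(2)] unfolding v_def by auto
  have "z = w"
  proof (rule lines_unique[of A B z w C D])
    show "orient A B z = 0" unfolding z_def by (rule orient_on)
    show "orient A B w = 0" unfolding w_def orient_comb by (rule v(3))
    show "orient C D z = 0" unfolding z_def orient_comb by (rule u(3))
    show "orient C D w = 0" unfolding w_def by (rule orient_on)
    show "orient A B D - orient A B C \<noteq> 0" using assms(2) by auto
  qed
  have "z \<in> closed_segment A B" unfolding z_def in_segment using u by auto
  moreover have "z \<in> closed_segment C D" unfolding \<open>z = w\<close> w_def in_segment using v by auto
  ultimately show ?thesis by blast
qed



definition P :: "real \<Rightarrow> complex" where
  "P x = Complex ((1 - x\<^sup>2) / (1 + x\<^sup>2)) (2 * x / (1 + x\<^sup>2))"

lemma pos1: "(1::real) + x\<^sup>2 > 0"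
  by (simp add: add_pos_nonneg)

lemma norm_P: "norm (P x) = 1"
proof -
  define D where "D = 1 + x\<^sup>2"
  have D: "D \<noteq> 0" using pos1[of x] D_def by simp
  have "((1 - x\<^sup>2) / D)\<^sup>2 + (2 * x / D)\<^sup>2 = ((1 - x\<^sup>2)\<^sup>2 + (2 * x)\<^sup>2) / D\<^sup>2"
    by (simp add: power_divide add_divide_distrib)
  also have "(1 - x\<^sup>2)\<^sup>2 + (2 * x)\<^sup>2 = D\<^sup>2" unfolding D_def by algebra
  finally have "(Re (P x))\<^sup>2 + (Im (P x))\<^sup>2 = 1" using D unfolding P_def D_def by simp
  thus ?thesis by (simp add: cmod_def)
qed

lemma orient_P_aux:
  fixes a b c Da Db Dc :: real
  assumes "Da = 1 + a\<^sup>2" "Db = 1 + b\<^sup>2" "Dc = 1 + c\<^sup>2" "Da \<noteq> 0" "Db \<noteq> 0" "Dc \<noteq> 0"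
  shows "((1-b\<^sup>2)/Db - (1-a\<^sup>2)/Da)*(2*c/Dc - 2*a/Da) - (2*b/Db - 2*a/Da)*((1-c\<^sup>2)/Dc - (1-a\<^sup>2)/Da)
     = 4*(b-a)*(c-b)*(c-a)/(Da*Db*Dc)"
proof -
  have "((1-b\<^sup>2)/Db - (1-a\<^sup>2)/Da)*(2*c/Dc - 2*a/Da) - (2*b/Db - 2*a/Da)*((1-c\<^sup>2)/Dc - (1-a\<^sup>2)/Da)
     = (((1-b\<^sup>2)*Da - (1-a\<^sup>2)*Db)*(2*c*Da - 2*a*Dc) - (2*b*Da - 2*a*Db)*((1-c\<^sup>2)*Da - (1-a\<^sup>2)*Dc)) / (Da*Da*Db*Dc)"
    using assms(4-6) by (simp add: field_simps)
  also have "((1-b\<^sup>2)*Da - (1-a\<^sup>2)*Db)*(2*c*Da - 2*a*Dc) - (2*b*Da - 2*a*Db)*((1-c\<^sup>2)*Da - (1-a\<^sup>2)*Dc)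
     = Da * (4*(b-a)*(c-b)*(c-a))"
    unfolding assms(1-3) by algebra
  finally show ?thesis using assms(4-6) by simp
qed

lemma orient_P:
  "orient (P a) (P b) (P c) = 4 * (b - a) * (c - b) * (c - a) / ((1 + a\<^sup>2) * (1 + b\<^sup>2) * (1 + c\<^sup>2))"
  using orient_P_aux[OF refl refl refl, of a b c] pos1[of a] pos1[of b] pos1[of c]
  unfolding orient_def P_def by simp



lemma P_inj: assumes "P a = P b" shows "a = b"
proof -
  have D: "1 + a\<^sup>2 \<noteq> 0" "1 + b\<^sup>2 \<noteq> 0" using pos1[of a] pos1[of b] by auto
  have "(1 - a\<^sup>2) / (1 + a\<^sup>2) = (1 - b\<^sup>2) / (1 + b\<^sup>2)" using arg_cong[OF assms, of Re] by (simp add: P_def)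
  hence "(1 - a\<^sup>2) * (1 + b\<^sup>2) = (1 - b\<^sup>2) * (1 + a\<^sup>2)" using D by (simp add: divide_simps)
  hence sq: "a\<^sup>2 = b\<^sup>2" by algebra
  have "2 * a / (1 + a\<^sup>2) = 2 * b / (1 + b\<^sup>2)" using arg_cong[OF assms, of Im] by (simp add: P_def)
  thus ?thesis using sq D by (simp add: divide_simps)
qed

lemma prod_sign:
  fixes a b c d :: real
  assumes "a \<noteq> b"
  shows "\<exists>k>0. orient (P a) (P b) (P c) * orient (P a) (P b) (P d) = k * ((c-a)*(c-b)*(d-a)*(d-b))"
proof -
  define k where "k = 16 * (b-a)\<^sup>2 / (((1 + a\<^sup>2) * (1 + b\<^sup>2) * (1 + c\<^sup>2)) * ((1 + a\<^sup>2) * (1 + b\<^sup>2) * (1 + d\<^sup>2)))"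
  have "k > 0" unfolding k_def using assms pos1[of a] pos1[of b] pos1[of c] pos1[of d]
    by (intro divide_pos_pos mult_pos_pos) auto
  moreover have "orient (P a) (P b) (P c) * orient (P a) (P b) (P d) = k * ((c-a)*(c-b)*(d-a)*(d-b))"
    unfolding orient_P k_def by (simp add: power2_eq_square field_simps)
  ultimately show ?thesis by blast
qed

lemma chord_cross:
  fixes a b c d :: real
  assumes "a \<noteq> b" "c \<noteq> d" "a \<noteq> c" "a \<noteq> d" "b \<noteq> c" "b \<noteq> d"
  shows "closed_segment (P a) (P b) \<inter> closed_segment (P c) (P d) \<noteq> {} \<longleftrightarrow>
         (c-a)*(c-b)*(d-a)*(d-b) < 0"
proof -
  define Q where "Q = (c-a)*(c-b)*(d-a)*(d-b)"
  have Q': "(a-c)*(a-d)*(b-c)*(b-d) = Q" unfolding Q_def by (simp add: algebra_simps)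
  obtain k where k: "k > 0" "orient (P a) (P b) (P c) * orient (P a) (P b) (P d) = k * Q"
    using prod_sign[OF assms(1), of c d] unfolding Q_def by blast
  obtain k' where k': "k' > 0" "orient (P c) (P d) (P a) * orient (P c) (P d) (P b) = k' * Q"
    using prod_sign[OF assms(2), of a b] Q' by auto
  have "Q \<noteq> 0" unfolding Q_def using assms by auto
  show ?thesis
  proof (cases "Q < 0")
    case True
    hence "orient (P c) (P d) (P a) * orient (P c) (P d) (P b) < 0"
          "orient (P a) (P b) (P c) * orient (P a) (P b) (P d) < 0"
      using k k' by (auto simp: mult_pos_neg)
    from seg_int[OF this] True show ?thesis unfolding Q_def by simp
  next
    case False
    hence "Q > 0" using \<open>Q \<noteq> 0\<close> by simp
    hence "orient (P c) (P d) (P a) * orient (P c) (P d) (P b) > 0" using k' by simp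
    from seg_disj[OF this] False show ?thesis unfolding Q_def by simp
  qed
qed



lemma key_lt:
  fixes i i' j j' m :: nat
  assumes "i < i'" "j \<le> m"
  shows "i * (m+1) + j < i' * (m+1) + j'"
proof -
  have "(i+1) * (m+1) \<le> i' * (m+1)" using assms(1) by (intro mult_right_mono) auto
  thus ?thesis using assms(2) by (simp add: algebra_simps)
qed

definition tk :: "nat \<Rightarrow> nat \<times> nat \<Rightarrow> nat" where "tk m p = fst p * (m+1) + snd p"
definition uk :: "nat \<Rightarrow> nat \<times> nat \<Rightarrow> nat" where "uk m p = snd p * (m+1) + fst p"

lemma tk_lt:
  assumes "p \<in> comp_grid_V m" "q \<in> comp_grid_V m"
  shows "tk m p < tk m q \<longleftrightarrow> fst p < fst q \<or> (fst p = fst q \<and> snd p < snd q)"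
proof -
  obtain i j i' j' where pq: "p = (i,j)" "q = (i',j')" by (cases p, cases q) auto
  have r: "i \<le> m" "j \<le> m" "i' \<le> m" "j' \<le> m" using assms pq by (auto simp: comp_grid_V_def)
  show ?thesis unfolding pq tk_def using key_lt[of i i' j m j'] key_lt[of i' i j' m j] r
    by (cases "i < i'"; cases "i' < i") auto
qed

lemma uk_lt:
  assumes "p \<in> comp_grid_V m" "q \<in> comp_grid_V m"
  shows "uk m p < uk m q \<longleftrightarrow> snd p < snd q \<or> (snd p = snd q \<and> fst p < fst q)"
proof -
  obtain i j i' j' where pq: "p = (i,j)" "q = (i',j')" by (cases p, cases q) auto
  have r: "i \<le> m" "j \<le> m" "i' \<le> m" "j' \<le> m" using assms pq by (auto simp: comp_grid_V_def)
  show ?thesis unfolding pq uk_def using key_lt[of j j' i m i'] key_lt[of j' j i' m i] r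
    by (cases "j < j'"; cases "j' < j") auto
qed

lemma tk_inj: "inj_on (tk m) (comp_grid_V m)"
proof (rule inj_onI)
  fix p q assume a: "p \<in> comp_grid_V m" "q \<in> comp_grid_V m" "tk m p = tk m q"
  show "p = q" using tk_lt[OF a(1,2)] tk_lt[OF a(2,1)] a(3) by (cases p, cases q) auto
qed

lemma uk_inj: "inj_on (uk m) (comp_grid_V m)"
proof (rule inj_onI)
  fix p q assume a: "p \<in> comp_grid_V m" "q \<in> comp_grid_V m" "uk m p = uk m q"
  show "p = q" using uk_lt[OF a(1,2)] uk_lt[OF a(2,1)] a(3) by (cases p, cases q) auto
qed

lemma uk_bound: assumes "p \<in> comp_grid_V m" shows "uk m p < (m+1)*(m+1)"
proof -
  have "uk m p \<le> m * (m+1) + m" using assms unfolding uk_def comp_grid_V_def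
    by (auto intro!: add_mono mult_right_mono)
  thus ?thesis by (simp add: algebra_simps)
qed

lemma grid_E_iff:
  assumes "p \<in> comp_grid_V m" "q \<in> comp_grid_V m" "p \<noteq> q"
  shows "comp_grid_E p q \<longleftrightarrow>
     (real (tk m q) - real (tk m p)) * (real (uk m q) - real (uk m p)) > 0"
proof -
  have A: "tk m p < tk m q \<longleftrightarrow> fst p < fst q \<or> (fst p = fst q \<and> snd p < snd q)"
       "tk m q < tk m p \<longleftrightarrow> fst q < fst p \<or> (fst q = fst p \<and> snd q < snd p)"
       "uk m p < uk m q \<longleftrightarrow> snd p < snd q \<or> (snd p = snd q \<and> fst p < fst q)"
       "uk m q < uk m p \<longleftrightarrow> snd q < snd p \<or> (snd q = snd p \<and> fst q < fst p)"
    using tk_lt[OF assms(1,2)] tk_lt[OF assms(2,1)] uk_lt[OF assms(1,2)] uk_lt[OF assms(2,1)] by auto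
  have ne: "fst p \<noteq> fst q \<or> snd p \<noteq> snd q" using assms(3) by (cases p, cases q) auto
  have "(real (tk m q) - real (tk m p)) * (real (uk m q) - real (uk m p)) > 0 \<longleftrightarrow>
        (tk m p < tk m q \<and> uk m p < uk m q) \<or> (tk m q < tk m p \<and> uk m q < uk m p)"
    by (auto simp: zero_less_mult_iff)
  also have "\<dots> \<longleftrightarrow> comp_grid_E p q"
    unfolding A comp_grid_E_def using assms(3) ne by auto
  finally show ?thesis by simp
qed

definition alp :: "nat \<Rightarrow> nat \<times> nat \<Rightarrow> real" where "alp m p = real (tk m p) + 1"
definition bet :: "nat \<Rightarrow> nat \<times> nat \<Rightarrow> real" where "bet m p = real (uk m p) - real ((m+1)*(m+1))"

lemma bet_neg: "p \<in> comp_grid_V m \<Longrightarrow> bet m p < 0"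
  using uk_bound[of p m] unfolding bet_def by linarith

lemma alp_pos: "alp m p > 0" unfolding alp_def by simp

lemma grid_circle: "circle_graph (comp_grid_V m) comp_grid_E"
proof -
  have 1: "simple_graph (comp_grid_V m) comp_grid_E"
    unfolding simple_graph_def comp_grid_E_def comp_grid_V_def by auto
  have 2: "\<forall>v\<in>comp_grid_V m. norm (P (alp m v)) = 1 \<and> norm (P (bet m v)) = 1 \<and> P (alp m v) \<noteq> P (bet m v)"
  proof
    fix v assume v: "v \<in> comp_grid_V m"
    have "P (alp m v) \<noteq> P (bet m v)" using P_inj alp_pos[of m v] bet_neg[OF v] by force
    thus "norm (P (alp m v)) = 1 \<and> norm (P (bet m v)) = 1 \<and> P (alp m v) \<noteq> P (bet m v)"
      by (simp add: norm_P)
  qed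
  have 3: "inj_on (\<lambda>v. closed_segment (P (alp m v)) (P (bet m v))) (comp_grid_V m)"
  proof (rule inj_onI)
    fix p q assume pq: "p \<in> comp_grid_V m" "q \<in> comp_grid_V m"
      "closed_segment (P (alp m p)) (P (bet m p)) = closed_segment (P (alp m q)) (P (bet m q))"
    hence "P (alp m p) \<in> {P (alp m q), P (bet m q)}" by (simp add: doubleton_eq_iff) (metis)
    hence "alp m p = alp m q \<or> alp m p = bet m q" using P_inj by auto
    hence "alp m p = alp m q" using alp_pos[of m p] bet_neg[OF pq(2)] by auto
    hence "tk m p = tk m q" unfolding alp_def by simp
    thus "p = q" using tk_inj pq(1,2) by (auto dest: inj_onD)
  qed
  have 4: "\<forall>p\<in>comp_grid_V m. \<forall>q\<in>comp_grid_V m. p \<noteq> q \<longrightarrow> (comp_grid_E p q \<longleftrightarrow>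
     closed_segment (P (alp m p)) (P (bet m p)) \<inter> closed_segment (P (alp m q)) (P (bet m q)) \<noteq> {})"
  proof (intro ballI impI)
  fix p q assume pq: "p \<in> comp_grid_V m" "q \<in> comp_grid_V m" "p \<noteq> q"
  have ta: "tk m p \<noteq> tk m q" "uk m p \<noteq> uk m q"
    using pq tk_inj uk_inj by (auto dest: inj_onD)
  have d: "alp m p \<noteq> bet m p" "alp m q \<noteq> bet m q" "alp m p \<noteq> alp m q" "alp m p \<noteq> bet m q"
     "bet m p \<noteq> alp m q" "bet m p \<noteq> bet m q"
    using alp_pos[of m p] alp_pos[of m q] bet_neg[OF pq(1)] bet_neg[OF pq(2)] ta
    unfolding alp_def bet_def by auto
  have c1: "alp m q - bet m p > 0" using alp_pos[of m q] bet_neg[OF pq(1)] by simp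
  have c2: "bet m q - alp m p < 0" using alp_pos[of m p] bet_neg[OF pq(2)] by simp
  have "(alp m q - alp m p) * (alp m q - bet m p) * (bet m q - alp m p) * (bet m q - bet m p) < 0
     \<longleftrightarrow> (alp m q - alp m p) * (bet m q - bet m p) > 0"
  proof -
    have e: "(alp m q - alp m p) * (alp m q - bet m p) * (bet m q - alp m p) * (bet m q - bet m p)
       = ((alp m q - alp m p) * (bet m q - bet m p)) * ((alp m q - bet m p) * (bet m q - alp m p))"
      by (simp add: algebra_simps)
    have y: "(alp m q - bet m p) * (bet m q - alp m p) < 0" using c1 c2 by (simp add: mult_pos_neg)
    have h: "\<And>X Y::real. Y < 0 \<Longrightarrow> X * Y < 0 \<longleftrightarrow> 0 < X" by (auto simp: mult_less_0_iff)
    show ?thesis unfolding e by (rule h[OF y])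
  qed
  also have "\<dots> \<longleftrightarrow> comp_grid_E p q"
    using grid_E_iff[OF pq] unfolding alp_def bet_def by simp
  finally show "comp_grid_E p q \<longleftrightarrow>
     closed_segment (P (alp m p)) (P (bet m p)) \<inter> closed_segment (P (alp m q)) (P (bet m q)) \<noteq> {}"
    using chord_cross[OF d] by simp
  qed
  show ?thesis unfolding circle_graph_def
    apply (rule conjI[OF 1])
    apply (rule exI[of _ "\<lambda>p. P (alp m p)"], rule exI[of _ "\<lambda>p. P (bet m p)"])
    using 2 3 4 by (intro conjI)
qed



lemma cut_rank_ge:
  assumes "finite X" "gf2_indep_rows V E X S"
  shows "card S \<le> cut_rank V E X"
proof -
  have "{S. gf2_indep_rows V E X S} \<subseteq> Pow X" unfolding gf2_indep_rows_def by auto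
  hence "finite {S. gf2_indep_rows V E X S}" using assms(1) finite_subset by blast
  thus ?thesis unfolding cut_rank_def using assms(2) by (auto intro!: Max_ge)
qed

lemma tri_rank:
  fixes K :: "nat set"
  assumes finX: "finite X" and K: "finite K"
    and inj: "inj_on x K" and xX: "\<forall>k\<in>K. x k \<in> X" and yY: "\<forall>k\<in>K. y k \<in> V - X"
    and diag: "\<forall>k\<in>K. E (x k) (y k)"
    and tri: "(\<forall>s\<in>K. \<forall>t\<in>K. s < t \<longrightarrow> \<not> E (x s) (y t)) \<or>
              (\<forall>s\<in>K. \<forall>t\<in>K. s < t \<longrightarrow> \<not> E (x t) (y s))"
  shows "card K \<le> cut_rank V E X"
proof -
  have "gf2_indep_rows V E X (x ` K)"
    unfolding gf2_indep_rows_def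
  proof (intro conjI allI impI)
    show "x ` K \<subseteq> X" using xX by auto
  next
    fix T assume T: "T \<subseteq> x ` K" "T \<noteq> {}"
    define K' where "K' = {k\<in>K. x k \<in> T}"
    have K'fin: "finite K'" using K unfolding K'_def by auto
    have K'ne: "K' \<noteq> {}" using T unfolding K'_def by auto
    have TK': "T = x ` K'" using T unfolding K'_def by auto
    obtain k0 where k0: "k0 \<in> K'" and k0ext: "\<forall>k\<in>K'. k \<noteq> k0 \<longrightarrow> \<not> E (x k) (y k0)"
    proof (cases "\<forall>s\<in>K. \<forall>t\<in>K. s < t \<longrightarrow> \<not> E (x s) (y t)")
      case True
      show ?thesis
      proof (rule that[of "Max K'"])
        show "Max K' \<in> K'" using K'fin K'ne by simp
        show "\<forall>k\<in>K'. k \<noteq> Max K' \<longrightarrow> \<not> E (x k) (y (Max K'))"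
        proof (intro ballI impI)
          fix k assume "k \<in> K'" "k \<noteq> Max K'"
          hence "k < Max K'" using K'fin by (simp add: order_neq_le_trans)
          thus "\<not> E (x k) (y (Max K'))" using True \<open>k \<in> K'\<close> \<open>Max K' \<in> K'\<close>
            unfolding K'_def by auto
        qed
      qed
    next
      case False
      hence F: "\<forall>s\<in>K. \<forall>t\<in>K. s < t \<longrightarrow> \<not> E (x t) (y s)" using tri by blast
      show ?thesis
      proof (rule that[of "Min K'"])
        show "Min K' \<in> K'" using K'fin K'ne by simp
        show "\<forall>k\<in>K'. k \<noteq> Min K' \<longrightarrow> \<not> E (x k) (y (Min K'))"
        proof (intro ballI impI)
          fix k assume "k \<in> K'" "k \<noteq> Min K'"
          hence "Min K' < k" using K'fin by (simp add: order_neq_le_trans)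
          thus "\<not> E (x k) (y (Min K'))" using F \<open>k \<in> K'\<close> \<open>Min K' \<in> K'\<close>
            unfolding K'_def by auto
        qed
      qed
    qed
    have "k0 \<in> K" using k0 unfolding K'_def by auto
    have "{z\<in>T. E z (y k0)} = {x k0}"
      using k0 k0ext diag \<open>k0 \<in> K\<close> unfolding TK' by auto
    hence "odd (card {z\<in>T. E z (y k0)})" by simp
    moreover have "y k0 \<in> V - X" using yY \<open>k0 \<in> K\<close> by auto
    ultimately show "\<exists>y\<in>V - X. odd (card {xa \<in> T. E xa y})" by blast
  qed
  from cut_rank_ge[OF finX this] show ?thesis using card_image[OF inj] by simp
qed



lemma finite_grid: "finite (comp_grid_V m)" unfolding comp_grid_V_def by simp

lemma rows_rank:
  fixes h :: "nat \<times> nat \<Rightarrow> 'a"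
  assumes inj: "inj_on h (comp_grid_V m)"
    and EE: "\<forall>p\<in>comp_grid_V m. \<forall>q\<in>comp_grid_V m. E (h p) (h q) = comp_grid_E p q"
    and XV: "X \<subseteq> h ` comp_grid_V m"
  shows "card {r\<in>{1..m}. (\<exists>c\<in>{1..m}. h (r,c) \<in> X) \<and> (\<exists>c\<in>{1..m}. h (r,c) \<notin> X)}
           \<le> 2 * cut_rank (h ` comp_grid_V m) E X"
proof -
  let ?G = "comp_grid_V m"
  let ?V = "h ` ?G"
  have finX: "finite X" using XV finite_grid finite_subset by blast
  have inG: "(r, c) \<in> ?G" if "r \<in> {1..m}" "c \<in> {1..m}" for r c
    using that unfolding comp_grid_V_def by auto
  define KA where "KA = {r\<in>{1..m}. h (r,1) \<in> X \<and> (\<exists>c\<in>{1..m}. h (r,c) \<notin> X)}"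
  define KB where "KB = {r\<in>{1..m}. h (r,1) \<notin> X \<and> (\<exists>c\<in>{1..m}. h (r,c) \<in> X)}"
  have sub: "{r\<in>{1..m}. (\<exists>c\<in>{1..m}. h (r,c) \<in> X) \<and> (\<exists>c\<in>{1..m}. h (r,c) \<notin> X)} \<subseteq> KA \<union> KB"
    unfolding KA_def KB_def by auto
  define cA where "cA r = (SOME c. c \<in> {1..m} \<and> h (r,c) \<notin> X)" for r
  define cB where "cB r = (SOME c. c \<in> {1..m} \<and> h (r,c) \<in> X)" for r
  have cA: "cA r \<in> {1..m}" "h (r, cA r) \<notin> X" "cA r \<noteq> 1" "m \<ge> 1" if "r \<in> KA" for r
  proof -
    have "\<exists>c. c \<in> {1..m} \<and> h (r,c) \<notin> X" using that unfolding KA_def by auto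
    hence "cA r \<in> {1..m} \<and> h (r, cA r) \<notin> X" unfolding cA_def by (rule someI_ex)
    thus "cA r \<in> {1..m}" "h (r, cA r) \<notin> X" by auto
    thus "cA r \<noteq> 1" using that unfolding KA_def by auto
    show "m \<ge> 1" using that unfolding KA_def by auto
  qed
  have cB: "cB r \<in> {1..m}" "h (r, cB r) \<in> X" "cB r \<noteq> 1" "m \<ge> 1" if "r \<in> KB" for r
  proof -
    have "\<exists>c. c \<in> {1..m} \<and> h (r,c) \<in> X" using that unfolding KB_def by auto
    hence "cB r \<in> {1..m} \<and> h (r, cB r) \<in> X" unfolding cB_def by (rule someI_ex)
    thus "cB r \<in> {1..m}" "h (r, cB r) \<in> X" by auto
    thus "cB r \<noteq> 1" using that unfolding KB_def by auto
    show "m \<ge> 1" using that unfolding KB_def by auto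
  qed
  have A: "card KA \<le> cut_rank ?V E X"
  proof (rule tri_rank[OF finX, where x="\<lambda>r. h (r,1)" and y="\<lambda>r. h (r, cA r)"])
    show "finite KA" unfolding KA_def by simp
    show "inj_on (\<lambda>r. h (r, 1)) KA"
    proof (rule inj_onI)
      fix r r' assume "r \<in> KA" "r' \<in> KA" "h (r,1) = h (r',1)"
      moreover have "(r,1) \<in> ?G" "(r',1) \<in> ?G" using calculation cA inG unfolding KA_def by auto
      ultimately show "r = r'" using inj by (auto dest: inj_onD)
    qed
    show "\<forall>k\<in>KA. h (k, 1) \<in> X" unfolding KA_def by auto
    show "\<forall>k\<in>KA. h (k, cA k) \<in> ?V - X"
      using cA inG unfolding KA_def by auto
    show "\<forall>k\<in>KA. E (h (k, 1)) (h (k, cA k))"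
    proof
      fix k assume k: "k \<in> KA"
      have "(k,1) \<in> ?G" "(k, cA k) \<in> ?G" using k cA[OF k] inG unfolding KA_def by auto
      thus "E (h (k, 1)) (h (k, cA k))" using EE cA[OF k] unfolding comp_grid_E_def by auto
    qed
    show "(\<forall>s\<in>KA. \<forall>t\<in>KA. s < t \<longrightarrow> \<not> E (h (s, 1)) (h (t, cA t))) \<or>
          (\<forall>s\<in>KA. \<forall>t\<in>KA. s < t \<longrightarrow> \<not> E (h (t, 1)) (h (s, cA s)))"
    proof (rule disjI2, intro ballI impI)
      fix s t assume st: "s \<in> KA" "t \<in> KA" "s < t"
      have "(t,1) \<in> ?G" "(s, cA s) \<in> ?G" using st cA inG unfolding KA_def by auto
      moreover have "cA s \<ge> 2" using cA(1,3)[OF st(1)] by auto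
      ultimately show "\<not> E (h (t, 1)) (h (s, cA s))" using EE st(3) unfolding comp_grid_E_def by auto
    qed
  qed
  have B: "card KB \<le> cut_rank ?V E X"
  proof (rule tri_rank[OF finX, where x="\<lambda>r. h (r, cB r)" and y="\<lambda>r. h (r,1)"])
    show "finite KB" unfolding KB_def by simp
    show "inj_on (\<lambda>r. h (r, cB r)) KB"
    proof (rule inj_onI)
      fix r r' assume "r \<in> KB" "r' \<in> KB" "h (r, cB r) = h (r', cB r')"
      moreover have "(r, cB r) \<in> ?G" "(r', cB r') \<in> ?G" using calculation cB inG unfolding KB_def by auto
      ultimately show "r = r'" using inj by (auto dest: inj_onD)
    qed
    show "\<forall>k\<in>KB. h (k, cB k) \<in> X" using cB by auto
    show "\<forall>k\<in>KB. h (k, 1) \<in> ?V - X"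
      using cB inG unfolding KB_def by auto
    show "\<forall>k\<in>KB. E (h (k, cB k)) (h (k, 1))"
    proof
      fix k assume k: "k \<in> KB"
      have "(k,1) \<in> ?G" "(k, cB k) \<in> ?G" using k cB[OF k] inG unfolding KB_def by auto
      thus "E (h (k, cB k)) (h (k, 1))" using EE cB[OF k] unfolding comp_grid_E_def by auto
    qed
    show "(\<forall>s\<in>KB. \<forall>t\<in>KB. s < t \<longrightarrow> \<not> E (h (s, cB s)) (h (t, 1))) \<or>
          (\<forall>s\<in>KB. \<forall>t\<in>KB. s < t \<longrightarrow> \<not> E (h (t, cB t)) (h (s, 1)))"
    proof (rule disjI1, intro ballI impI)
      fix s t assume st: "s \<in> KB" "t \<in> KB" "s < t"
      have "(t,1) \<in> ?G" "(s, cB s) \<in> ?G" using st cB inG unfolding KB_def by auto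
      moreover have "cB s \<ge> 2" using cB(1,3)[OF st(1)] by auto
      ultimately show "\<not> E (h (s, cB s)) (h (t, 1))" using EE st(3) unfolding comp_grid_E_def by auto
    qed
  qed
  have "card {r\<in>{1..m}. (\<exists>c\<in>{1..m}. h (r,c) \<in> X) \<and> (\<exists>c\<in>{1..m}. h (r,c) \<notin> X)} \<le> card (KA \<union> KB)"
    by (rule card_mono[OF _ sub]) (simp add: KA_def KB_def)
  also have "\<dots> \<le> card KA + card KB" by (rule card_Un_le)
  finally show ?thesis using A B by simp
qed



lemma arith_sq:
  fixes a b m :: nat
  assumes "m * m \<le> 4 * (a * b)"
  shows "m \<le> 2 * a \<or> m \<le> 2 * b"
proof (rule ccontr)
  assume "\<not> (m \<le> 2 * a \<or> m \<le> 2 * b)"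
  hence "2 * a < m" "2 * b < m" by auto
  hence "(2 * a) * (2 * b) < m * m" by (intro mult_strict_mono) auto
  thus False using assms by simp
qed

lemma sub_C:
  fixes F :: "nat \<times> nat \<Rightarrow> bool"
  assumes rows: "\<forall>r\<in>{1..m}. \<exists>c\<in>{1..m}. F (r,c)" and cols: "\<forall>c\<in>{1..m}. \<exists>r\<in>{1..m}. F (r,c)"
    and big: "m\<^sup>2 \<le> 4 * card {p\<in>comp_grid_V m. \<not> F p}"
  shows "m \<le> 2 * card {r\<in>{1..m}. (\<exists>c\<in>{1..m}. F (r,c)) \<and> (\<exists>c\<in>{1..m}. \<not> F (r,c))} \<or>
         m \<le> 2 * card {c\<in>{1..m}. (\<exists>r\<in>{1..m}. F (r,c)) \<and> (\<exists>r\<in>{1..m}. \<not> F (r,c))}"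
proof -
  define MR where "MR = {r\<in>{1..m}. (\<exists>c\<in>{1..m}. F (r,c)) \<and> (\<exists>c\<in>{1..m}. \<not> F (r,c))}"
  define MC where "MC = {c\<in>{1..m}. (\<exists>r\<in>{1..m}. F (r,c)) \<and> (\<exists>r\<in>{1..m}. \<not> F (r,c))}"
  have "{p\<in>comp_grid_V m. \<not> F p} \<subseteq> MR \<times> MC"
    using rows cols unfolding MR_def MC_def comp_grid_V_def by auto
  hence "card {p\<in>comp_grid_V m. \<not> F p} \<le> card (MR \<times> MC)"
    by (rule card_mono[rotated]) (simp add: MR_def MC_def)
  hence "m * m \<le> 4 * (card MR * card MC)" using big by (simp add: card_cartesian_product power2_eq_square)
  from arith_sq[OF this] show ?thesis unfolding MR_def MC_def .
qed

lemma comb: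
  fixes F :: "nat \<times> nat \<Rightarrow> bool"
  assumes b1: "m\<^sup>2 \<le> 4 * card {p\<in>comp_grid_V m. F p}" and b2: "m\<^sup>2 \<le> 4 * card {p\<in>comp_grid_V m. \<not> F p}"
  shows "m \<le> 2 * card {r\<in>{1..m}. (\<exists>c\<in>{1..m}. F (r,c)) \<and> (\<exists>c\<in>{1..m}. \<not> F (r,c))} \<or>
         m \<le> 2 * card {c\<in>{1..m}. (\<exists>r\<in>{1..m}. F (r,c)) \<and> (\<exists>r\<in>{1..m}. \<not> F (r,c))}"
proof -
  define MR where "MR = {r\<in>{1..m}. (\<exists>c\<in>{1..m}. F (r,c)) \<and> (\<exists>c\<in>{1..m}. \<not> F (r,c))}"
  define MC where "MC = {c\<in>{1..m}. (\<exists>r\<in>{1..m}. F (r,c)) \<and> (\<exists>r\<in>{1..m}. \<not> F (r,c))}"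
  have MR': "MR = {r\<in>{1..m}. (\<exists>c\<in>{1..m}. \<not> F (r,c)) \<and> (\<exists>c\<in>{1..m}. \<not> \<not> F (r,c))}"
    unfolding MR_def by auto
  have MC': "MC = {c\<in>{1..m}. (\<exists>r\<in>{1..m}. \<not> F (r,c)) \<and> (\<exists>r\<in>{1..m}. \<not> \<not> F (r,c))}"
    unfolding MC_def by auto
  have b1': "m\<^sup>2 \<le> 4 * card {p\<in>comp_grid_V m. \<not> \<not> F p}" using b1 by simp
  show ?thesis
  proof (cases "(\<exists>r\<in>{1..m}. \<forall>c\<in>{1..m}. F (r,c)) \<and> (\<exists>r\<in>{1..m}. \<forall>c\<in>{1..m}. \<not> F (r,c))")
    case True
    hence "MC = {1..m}" unfolding MC_def by auto
    thus ?thesis unfolding MC_def by simp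
  next
    case nA: False
    show ?thesis
    proof (cases "(\<exists>c\<in>{1..m}. \<forall>r\<in>{1..m}. F (r,c)) \<and> (\<exists>c\<in>{1..m}. \<forall>r\<in>{1..m}. \<not> F (r,c))")
      case True
      hence "MR = {1..m}" unfolding MR_def by auto
      thus ?thesis unfolding MR_def by simp
    next
      case nB: False
      show ?thesis
      proof (cases "(\<forall>r\<in>{1..m}. \<exists>c\<in>{1..m}. F (r,c)) \<and> (\<forall>c\<in>{1..m}. \<exists>r\<in>{1..m}. F (r,c))")
        case True
        thus ?thesis using sub_C[OF _ _ b2] by blast
      next
        case nC: False
        have "(\<forall>r\<in>{1..m}. \<exists>c\<in>{1..m}. \<not> F (r,c)) \<and> (\<forall>c\<in>{1..m}. \<exists>r\<in>{1..m}. \<not> F (r,c))"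
        proof (intro conjI ballI)
          obtain r0 c0 where rc: "(r0 \<in> {1..m} \<and> (\<forall>c\<in>{1..m}. \<not> F (r0,c))) \<or> (c0 \<in> {1..m} \<and> (\<forall>r\<in>{1..m}. \<not> F (r,c0)))"
            using nC by blast
          fix r assume r: "r \<in> {1..m}"
          show "\<exists>c\<in>{1..m}. \<not> F (r,c)"
          proof (rule ccontr)
            assume "\<not> (\<exists>c\<in>{1..m}. \<not> F (r,c))"
            hence pr: "\<forall>c\<in>{1..m}. F (r,c)" by blast
            show False using rc
            proof
              assume a: "r0 \<in> {1..m} \<and> (\<forall>c\<in>{1..m}. \<not> F (r0,c))"
              have "(\<exists>r\<in>{1..m}. \<forall>c\<in>{1..m}. F (r,c)) \<and> (\<exists>r\<in>{1..m}. \<forall>c\<in>{1..m}. \<not> F (r,c))"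
                using a pr r by (intro conjI bexI[of _ r] bexI[of _ r0]) auto
              thus False using nA by simp
            next
              assume a: "c0 \<in> {1..m} \<and> (\<forall>r\<in>{1..m}. \<not> F (r,c0))"
              have "F (r,c0)" using pr a by simp
              moreover have "\<not> F (r,c0)" using a r by simp
              ultimately show False by simp
            qed
          qed
        next
          obtain r0 c0 where rc: "(r0 \<in> {1..m} \<and> (\<forall>c\<in>{1..m}. \<not> F (r0,c))) \<or> (c0 \<in> {1..m} \<and> (\<forall>r\<in>{1..m}. \<not> F (r,c0)))"
            using nC by blast
          fix c assume c: "c \<in> {1..m}"
          show "\<exists>r\<in>{1..m}. \<not> F (r,c)"
          proof (rule ccontr)
            assume "\<not> (\<exists>r\<in>{1..m}. \<not> F (r,c))"
            hence pc: "\<forall>r\<in>{1..m}. F (r,c)" by blast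
            show False using rc
            proof
              assume a: "r0 \<in> {1..m} \<and> (\<forall>c\<in>{1..m}. \<not> F (r0,c))"
              have "F (r0,c)" using pc a by simp
              moreover have "\<not> F (r0,c)" using a c by simp
              ultimately show False by simp
            next
              assume a: "c0 \<in> {1..m} \<and> (\<forall>r\<in>{1..m}. \<not> F (r,c0))"
              have "(\<exists>c\<in>{1..m}. \<forall>r\<in>{1..m}. F (r,c)) \<and> (\<exists>c\<in>{1..m}. \<forall>r\<in>{1..m}. \<not> F (r,c))"
                using a pc c by (intro conjI bexI[of _ c] bexI[of _ c0]) auto
              thus False using nB by simp
            qed
          qed
        qed
        hence "m \<le> 2 * card MR \<or> m \<le> 2 * card MC"
          unfolding MR' MC' using sub_C[OF _ _ b1'] by blast
        thus ?thesis unfolding MR_def MC_def .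
      qed
    qed
  qed
qed

lemma grid_cut:
  fixes h :: "nat \<times> nat \<Rightarrow> 'a"
  assumes inj: "inj_on h (comp_grid_V m)"
    and EE: "\<forall>p\<in>comp_grid_V m. \<forall>q\<in>comp_grid_V m. E (h p) (h q) = comp_grid_E p q"
    and XV: "X \<subseteq> h ` comp_grid_V m"
    and b1: "m\<^sup>2 \<le> 4 * card X" and b2: "m\<^sup>2 \<le> 4 * card (h ` comp_grid_V m - X)"
  shows "m \<le> 4 * cut_rank (h ` comp_grid_V m) E X"
proof -
  let ?G = "comp_grid_V m"
  define F where "F p = (h p \<in> X)" for p
  have sw: "prod.swap ` ?G = ?G" unfolding comp_grid_V_def by auto
  have X1: "X = h ` {p\<in>?G. F p}" using XV unfolding F_def by auto
  have X2: "h ` ?G - X = h ` {p\<in>?G. \<not> F p}" unfolding F_def by auto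
  have c1: "card X = card {p\<in>?G. F p}" unfolding X1 by (rule card_image) (rule inj_on_subset[OF inj], auto)
  have c2: "card (h ` ?G - X) = card {p\<in>?G. \<not> F p}" unfolding X2 by (rule card_image) (rule inj_on_subset[OF inj], auto)
  have R: "card {r\<in>{1..m}. (\<exists>c\<in>{1..m}. F (r,c)) \<and> (\<exists>c\<in>{1..m}. \<not> F (r,c))} \<le> 2 * cut_rank (h ` ?G) E X"
    using rows_rank[OF inj EE XV] unfolding F_def by simp
  have inj': "inj_on (h \<circ> prod.swap) ?G"
  proof (rule inj_onI)
    fix p q assume "p \<in> ?G" "q \<in> ?G" "(h \<circ> prod.swap) p = (h \<circ> prod.swap) q"
    moreover hence "prod.swap p \<in> ?G" "prod.swap q \<in> ?G" using sw by auto
    ultimately have "prod.swap p = prod.swap q" using inj by (auto dest: inj_onD)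
    thus "p = q" by (metis swap_swap)
  qed
  have EE': "\<forall>p\<in>?G. \<forall>q\<in>?G. E ((h \<circ> prod.swap) p) ((h \<circ> prod.swap) q) = comp_grid_E p q"
  proof (intro ballI)
    fix p q assume "p \<in> ?G" "q \<in> ?G"
    hence "prod.swap p \<in> ?G" "prod.swap q \<in> ?G" using sw by auto
    hence "E (h (prod.swap p)) (h (prod.swap q)) = comp_grid_E (prod.swap p) (prod.swap q)" using EE by blast
    also have "\<dots> = comp_grid_E p q" unfolding comp_grid_E_def by (cases p, cases q) auto
    finally show "E ((h \<circ> prod.swap) p) ((h \<circ> prod.swap) q) = comp_grid_E p q" by simp
  qed
  have img: "(h \<circ> prod.swap) ` ?G = h ` ?G" using sw by (metis image_comp)
  have XV': "X \<subseteq> (h \<circ> prod.swap) ` ?G" using XV img by simp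
  have C: "card {c\<in>{1..m}. (\<exists>r\<in>{1..m}. F (r,c)) \<and> (\<exists>r\<in>{1..m}. \<not> F (r,c))} \<le> 2 * cut_rank (h ` ?G) E X"
    using rows_rank[OF inj' EE' XV'] unfolding F_def img by simp
  from comb[of m F] b1 b2 c1 c2 R C show ?thesis by linarith
qed



lemma rtranclp_sym:
  assumes sym: "\<And>x y. R x y \<Longrightarrow> R y x" and "R\<^sup>*\<^sup>* a b"
  shows "R\<^sup>*\<^sup>* b a"
  using assms(2)
proof (induction rule: rtranclp_induct)
  case base thus ?case by simp
next
  case (step y z)
  have "R z y" using sym step(2) .
  thus ?case using step(3) by (rule converse_rtranclp_into_rtranclp)
qed

lemma finite_tree_edges: "finite N \<Longrightarrow> finite (tree_edges N T)"
proof -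
  assume "finite N"
  have "tree_edges N T \<subseteq> (\<lambda>(s,t). {s,t}) ` (N \<times> N)" unfolding tree_edges_def by auto
  thus ?thesis using \<open>finite N\<close> finite_subset by blast
qed

lemma connected_edges:
  fixes R :: "nat \<Rightarrow> nat \<Rightarrow> bool"
  assumes fin: "finite N" and r: "r \<in> N" and inN: "\<And>x y. R x y \<Longrightarrow> y \<in> N"
    and conn: "\<And>x. x \<in> N \<Longrightarrow> R\<^sup>*\<^sup>* x r"
  shows "card N - 1 \<le> card (tree_edges N R)"
proof -
  define dist where "dist x = (LEAST k. (R ^^ k) x r)" for x
  have ex: "\<exists>k. (R ^^ k) x r" if "x \<in> N" for x using conn[OF that] by (simp add: rtranclp_power)
  have par: "\<exists>p. R x p \<and> dist p < dist x" if "x \<in> N" "x \<noteq> r" for x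
  proof -
    have d: "(R ^^ dist x) x r" unfolding dist_def using ex[OF that(1)] by (rule LeastI_ex)
    have "dist x \<noteq> 0"
    proof
      assume "dist x = 0"
      hence "(R ^^ 0) x r" using d by simp
      hence "x = r" by (rule relpowp_0_E)
      thus False using that(2) by simp
    qed
    then obtain k where k: "dist x = Suc k" by (cases "dist x") auto
    then obtain p where p: "R x p" "(R ^^ k) p r" using d relpowp_Suc_D2 by metis
    have "dist p \<le> k" unfolding dist_def using p(2) by (rule Least_le)
    thus ?thesis using p k by auto
  qed
  define pa where "pa x = (SOME p. R x p \<and> dist p < dist x)" for x
  have pa: "R x (pa x)" "dist (pa x) < dist x" if "x \<in> N" "x \<noteq> r" for x
    using someI_ex[OF par[OF that]] unfolding pa_def by auto
  have inj: "inj_on (\<lambda>x. {x, pa x}) (N - {r})"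
  proof (rule inj_onI)
    fix x y assume xy: "x \<in> N - {r}" "y \<in> N - {r}" "{x, pa x} = {y, pa y}"
    show "x = y"
    proof (rule ccontr)
      assume "x \<noteq> y"
      hence "x = pa y" "y = pa x" using xy(3) by (auto simp: doubleton_eq_iff)
      thus False using pa(2)[of x] pa(2)[of y] xy(1,2) by auto
    qed
  qed
  have sub: "(\<lambda>x. {x, pa x}) ` (N - {r}) \<subseteq> tree_edges N R"
    unfolding tree_edges_def using pa inN by blast
  have "card (N - {r}) \<le> card (tree_edges N R)"
    using card_inj_on_le[OF inj sub finite_tree_edges[OF fin]] .
  thus ?thesis using r fin by simp
qed

definition del :: "(nat \<Rightarrow> nat \<Rightarrow> bool) \<Rightarrow> nat \<Rightarrow> nat \<Rightarrow> nat \<Rightarrow> nat \<Rightarrow> bool" where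
  "del T s t = (\<lambda>x y. T x y \<and> {x, y} \<noteq> {s, t})"

lemma del_comm: "del T s t = del T t s"
  unfolding del_def by (auto simp: insert_commute)

lemma edge_side_del: "edge_side V T L s t = {v\<in>V. (del T s t)\<^sup>*\<^sup>* s (L v)}"
  unfolding edge_side_def del_def by simp

lemma del_sym: assumes "is_tree N T" shows "del T s t x y \<Longrightarrow> del T s t y x"
  using assms unfolding del_def is_tree_def by (auto simp: insert_commute)

lemma bridge:
  assumes tree: "is_tree N T" and st: "T s t"
  shows "\<not> (del T s t)\<^sup>*\<^sup>* s t"
proof
  assume reach: "(del T s t)\<^sup>*\<^sup>* s t"
  let ?R = "del T s t"
  have symT: "\<And>x y. T x y \<Longrightarrow> T x y \<and> T y x" using tree unfolding is_tree_def by blast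
  have inN: "\<And>x y. T x y \<Longrightarrow> x \<in> N \<and> y \<in> N" using tree unfolding is_tree_def by blast
  have fin: "finite N" using tree unfolding is_tree_def by blast
  have sN: "s \<in> N" "t \<in> N" using inN[OF st] by auto
  have neq: "s \<noteq> t" using tree st unfolding is_tree_def by blast
  have reach': "?R\<^sup>*\<^sup>* t s" using rtranclp_sym[OF del_sym[OF tree] reach] .
  have conv: "?R\<^sup>*\<^sup>* x y" if "T\<^sup>*\<^sup>* x y" for x y
    using that
  proof (induction rule: rtranclp_induct)
    case base thus ?case by simp
  next
    case (step y z)
    show ?case
    proof (cases "{y, z} = {s, t}")
      case True
      hence "(y = s \<and> z = t) \<or> (y = t \<and> z = s)" by (auto simp: doubleton_eq_iff)
      thus ?thesis using step(3) reach reach' by (auto intro: rtranclp_trans)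
    next
      case False
      hence "?R y z" using step(2) unfolding del_def by simp
      thus ?thesis using step(3) by simp
    qed
  qed
  have "card N - 1 \<le> card (tree_edges N ?R)"
  proof (rule connected_edges[OF fin sN(1)])
    show "\<And>x y. ?R x y \<Longrightarrow> y \<in> N" using inN unfolding del_def by blast
    show "\<And>x. x \<in> N \<Longrightarrow> ?R\<^sup>*\<^sup>* x s" using conv tree sN(1) unfolding is_tree_def by blast
  qed
  moreover have "tree_edges N ?R = tree_edges N T - {{s, t}}"
    unfolding tree_edges_def del_def by auto
  moreover have "{s, t} \<in> tree_edges N T" unfolding tree_edges_def using sN st by blast
  moreover have "card (tree_edges N T) = card N - 1" using tree unfolding is_tree_def by blast
  moreover have "card N \<ge> 2"
  proof -
    have "{s, t} \<subseteq> N" using sN by auto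
    hence "card {s, t} \<le> card N" using fin by (rule card_mono[rotated])
    thus ?thesis using neq by simp
  qed
  ultimately show False using finite_tree_edges[OF fin, of T] by (simp add: card_Diff_singleton)
qed



lemma tree_sym: "is_tree N T \<Longrightarrow> T x y \<Longrightarrow> T y x" unfolding is_tree_def by blast
lemma tree_inN: "is_tree N T \<Longrightarrow> T x y \<Longrightarrow> x \<in> N \<and> y \<in> N" unfolding is_tree_def by blast
lemma tree_irr: "is_tree N T \<Longrightarrow> \<not> T x x" unfolding is_tree_def by blast
lemma tree_conn: "is_tree N T \<Longrightarrow> x \<in> N \<Longrightarrow> y \<in> N \<Longrightarrow> T\<^sup>*\<^sup>* x y" unfolding is_tree_def by blast

lemma cover:
  assumes tree: "is_tree N T" and st: "T s t" and x: "x \<in> N"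
  shows "(del T s t)\<^sup>*\<^sup>* s x \<or> (del T s t)\<^sup>*\<^sup>* t x"
proof -
  have "T\<^sup>*\<^sup>* s x" using tree_conn[OF tree _ x] tree_inN[OF tree st] by blast
  thus ?thesis
  proof (induction rule: rtranclp_induct)
    case base thus ?case by simp
  next
    case (step y z)
    show ?case
    proof (cases "{y, z} = {s, t}")
      case True
      hence "z = s \<or> z = t" by (auto simp: doubleton_eq_iff)
      thus ?thesis by auto
    next
      case False
      hence "del T s t y z" using step(2) unfolding del_def by simp
      thus ?thesis using step(3) by (meson rtranclp.rtrancl_into_rtrancl)
    qed
  qed
qed

lemma disjoint:
  assumes tree: "is_tree N T" and st: "T s t"
    and "(del T s t)\<^sup>*\<^sup>* s x" "(del T s t)\<^sup>*\<^sup>* t x"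
  shows False
proof -
  have "(del T s t)\<^sup>*\<^sup>* x t" using rtranclp_sym[OF del_sym[OF tree] assms(4)] .
  hence "(del T s t)\<^sup>*\<^sup>* s t" using assms(3) by (rule rtranclp_trans[rotated])
  thus False using bridge[OF tree st] by simp
qed

lemma leaves_N: "rank_decomposition V N T L \<Longrightarrow> v \<in> V \<Longrightarrow> L v \<in> N"
  unfolding rank_decomposition_def bij_betw_def tree_leaves_def by auto

lemma side_compl:
  assumes rd: "rank_decomposition V N T L" and st: "T s t"
  shows "edge_side V T L t s = V - edge_side V T L s t"
proof -
  have tree: "is_tree N T" using rd unfolding rank_decomposition_def by blast
  show ?thesis unfolding edge_side_del del_comm[of T t s]
    using cover[OF tree st leaves_N[OF rd]] disjoint[OF tree st] by blast
qed

lemma reroute: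
  assumes "Q\<^sup>*\<^sup>* a b" "\<forall>x. Q\<^sup>*\<^sup>* a x \<longrightarrow> x \<noteq> c" "\<forall>x y. Q x y \<longrightarrow> x \<noteq> c \<longrightarrow> y \<noteq> c \<longrightarrow> Q' x y"
  shows "Q'\<^sup>*\<^sup>* a b"
  using assms(1)
proof (induction rule: rtranclp_induct)
  case base thus ?case by simp
next
  case (step y z)
  have "Q\<^sup>*\<^sup>* a z" using step(1,2) by simp
  hence "y \<noteq> c" "z \<noteq> c" using assms(2) step(1) by auto
  hence "Q' y z" using assms(3) step(2) by blast
  thus ?case using step(3) by simp
qed

lemma grow:
  assumes tree: "is_tree N T" and st: "T s t" and tu: "T t u" and us: "u \<noteq> s"
    and x: "(del T s t)\<^sup>*\<^sup>* s x"
  shows "(del T t u)\<^sup>*\<^sup>* t x"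
proof -
  have "del T t u t s" using tree_sym[OF tree st] us unfolding del_def by (auto simp: doubleton_eq_iff)
  moreover have "(del T t u)\<^sup>*\<^sup>* s x"
  proof (rule reroute[OF x, where c=t])
    show "\<forall>x. (del T s t)\<^sup>*\<^sup>* s x \<longrightarrow> x \<noteq> t" using bridge[OF tree st] by blast
    show "\<forall>x y. del T s t x y \<longrightarrow> x \<noteq> t \<longrightarrow> y \<noteq> t \<longrightarrow> del T t u x y"
    proof (intro allI impI)
      fix x y assume a: "del T s t x y" "x \<noteq> t" "y \<noteq> t"
      have "{x, y} \<noteq> {t, u}"
      proof
        assume "{x, y} = {t, u}"
        hence "t \<in> {x, y}" by simp
        thus False using a(2,3) by simp
      qed
      thus "del T t u x y" using a(1) unfolding del_def by simp
    qed
  qed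
  ultimately show ?thesis by (rule converse_rtranclp_into_rtranclp)
qed

lemma split3:
  assumes tree: "is_tree N T" and st: "T s t" and nb: "{y\<in>N. T t y} = {s, u, w}"
    and x: "(del T s t)\<^sup>*\<^sup>* t x"
  shows "x = t \<or> (del T u t)\<^sup>*\<^sup>* u x \<or> (del T w t)\<^sup>*\<^sup>* w x"
  using x
proof (induction rule: rtranclp_induct)
  case base thus ?case by simp
next
  case (step y z)
  have Tyz: "T y z" and ne: "{y, z} \<noteq> {s, t}" using step(2) unfolding del_def by auto
  from step(3) show ?case
  proof (elim disjE)
    assume "y = t"
    hence "z \<in> {s, u, w}" using nb Tyz tree_inN[OF tree Tyz] by blast
    moreover have "z \<noteq> s" using ne \<open>y = t\<close> by (auto simp: insert_commute)
    ultimately show ?case by auto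
  next
    assume a: "(del T u t)\<^sup>*\<^sup>* u y"
    show ?case
    proof (cases "{y, z} = {u, t}")
      case True
      hence "z = u \<or> z = t" by (auto simp: doubleton_eq_iff)
      thus ?thesis by auto
    next
      case False
      hence "del T u t y z" using Tyz unfolding del_def by simp
      thus ?thesis using a by (meson rtranclp.rtrancl_into_rtrancl)
    qed
  next
    assume a: "(del T w t)\<^sup>*\<^sup>* w y"
    show ?case
    proof (cases "{y, z} = {w, t}")
      case True
      hence "z = w \<or> z = t" by (auto simp: doubleton_eq_iff)
      thus ?thesis by auto
    next
      case False
      hence "del T w t y z" using Tyz unfolding del_def by simp
      thus ?thesis using a by (meson rtranclp.rtrancl_into_rtrancl)
    qed
  qed
qed

lemma leaf_side:
  assumes tree: "is_tree N T" and st: "T s t" and nb: "{y\<in>N. T t y} = {s}"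
    and x: "(del T s t)\<^sup>*\<^sup>* t x"
  shows "x = t"
  using x
proof (induction rule: rtranclp_induct)
  case base thus ?case by simp
next
  case (step y z)
  have Tyz: "T y z" and ne: "{y, z} \<noteq> {s, t}" using step(2) unfolding del_def by auto
  have "z \<in> {s}" using nb Tyz tree_inN[OF tree Tyz] step(3) by blast
  hence False using ne step(3) by (auto simp: insert_commute)
  thus ?case ..
qed



lemma balanced:
  assumes rd: "rank_decomposition V N T L" and finV: "finite V" and n2: "2 \<le> card V"
  shows "\<exists>s t. T s t \<and> card V \<le> 3 * card (edge_side V T L s t) \<and>
                card V \<le> 3 * card (V - edge_side V T L s t)"
proof (rule ccontr)
  assume nb: "\<not> ?thesis"
  define n where "n = card V"
  define A where "A s t = edge_side V T L s t" for s t
  define NS where "NS s t = {x\<in>N. (del T s t)\<^sup>*\<^sup>* s x}" for s t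
  have tree: "is_tree N T" using rd unfolding rank_decomposition_def by blast
  have finN: "finite N" using tree unfolding is_tree_def by blast
  have deg: "\<forall>s\<in>N. tree_degree N T s \<in> {1, 3}" using rd unfolding rank_decomposition_def by blast
  have bij: "bij_betw L V (tree_leaves N T)" using rd unfolding rank_decomposition_def by blast
  have injL: "inj_on L V" using bij by (rule bij_betw_imp_inj_on)
  have Lleaf: "L v \<in> tree_leaves N T" if "v \<in> V" for v using bij that by (auto simp: bij_betw_def)
  have AV: "A s t \<subseteq> V" for s t unfolding A_def edge_side_def by auto
  have cA: "card (A s t) \<le> n" for s t unfolding n_def using AV finV by (rule card_mono[rotated])
  have compl: "A t s = V - A s t" if "T s t" for s t unfolding A_def using side_compl[OF rd that] .
  have ccompl: "card (A t s) = n - card (A s t)" if "T s t" for s t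
    unfolding compl[OF that] n_def using AV[of s t] finV by (meson card_Diff_subset finite_subset)
  have unb: "3 * card (A s t) < n \<or> 3 * card (A t s) < n" if "T s t" for s t
    using nb that compl[OF that] unfolding A_def n_def by force
  define D where "D = {(s, t). T s t \<and> 3 * card (A s t) < n}"
  have finD: "finite D"
  proof -
    have "D \<subseteq> N \<times> N" unfolding D_def using tree_inN[OF tree] by auto
    thus ?thesis using finN finite_subset by blast
  qed
  have "\<exists>a b. T a b"
  proof -
    have "card (tree_leaves N T) = n" unfolding n_def using bij by (simp add: bij_betw_same_card)
    hence "2 \<le> card (tree_leaves N T)" using n2 n_def by simp
    then obtain a b where ab: "a \<in> tree_leaves N T" "b \<in> tree_leaves N T" "a \<noteq> b"
    proof -
      have fl: "finite (tree_leaves N T)" using finN unfolding tree_leaves_def by simp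
      have "\<not> card (tree_leaves N T) \<le> Suc 0" using \<open>2 \<le> card (tree_leaves N T)\<close> by simp
      hence "\<not> (\<forall>a1\<in>tree_leaves N T. \<forall>a2\<in>tree_leaves N T. a1 = a2)"
        using card_le_Suc0_iff_eq[OF fl] by simp
      thus ?thesis using that by blast
    qed
    hence "a \<in> N" "b \<in> N" unfolding tree_leaves_def by auto
    hence "T\<^sup>*\<^sup>* a b" using tree_conn[OF tree] by blast
    thus ?thesis using ab(3) by (metis converse_rtranclpE)
  qed
  then obtain a b where "T a b" by blast
  hence "D \<noteq> {}" using unb[of a b] tree_sym[OF tree] unfolding D_def by blast
  define f where "f = (\<lambda>(s, t). card (NS s t))"
  define M where "M = Max (f ` D)"
  have "M \<in> f ` D" unfolding M_def using finD \<open>D \<noteq> {}\<close> by simp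
  then obtain s t where stD: "(s, t) \<in> D" and fM: "f (s, t) = M" by auto
  have maxi: "card (NS s' t') \<le> card (NS s t)" if "(s', t') \<in> D" for s' t'
  proof -
    have "f (s', t') \<le> M" unfolding M_def using finD that by simp
    thus ?thesis using fM unfolding f_def by simp
  qed
  have st: "T s t" and small: "3 * card (A s t) < n" using stD unfolding D_def by auto
  have ts: "T t s" using tree_sym[OF tree st] .
  have tN: "t \<in> N" using tree_inN[OF tree st] by simp
  have sin: "s \<in> {y\<in>N. T t y}" using ts tree_inN[OF tree st] by simp
  have finNb: "finite {y\<in>N. T t y}" using finN by simp
  have Ats: "A t s = {v\<in>V. (del T s t)\<^sup>*\<^sup>* t (L v)}" unfolding A_def edge_side_del del_comm[of T t s] ..
  from deg tN have "tree_degree N T t = 1 \<or> tree_degree N T t = 3" by auto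
  thus False
  proof
    assume d1: "tree_degree N T t = 1"
    hence nb1: "{y\<in>N. T t y} = {s}" using sin unfolding tree_degree_def
      by (metis card_1_singletonE singletonD)
    have "A t s \<subseteq> {v\<in>V. L v = t}" unfolding Ats using leaf_side[OF tree st nb1] by auto
    moreover have "card {v\<in>V. L v = t} \<le> 1"
      using injL finV by (auto simp: card_le_Suc0_iff_eq dest: inj_onD)
    moreover have "finite {v\<in>V. L v = t}" using finV by simp
    ultimately have "card (A t s) \<le> 1" using card_mono le_trans by blast
    thus False using ccompl[OF st] small n2 cA[of s t] unfolding n_def by linarith
  next
    assume d3: "tree_degree N T t = 3"
    hence "card ({y\<in>N. T t y} - {s}) = 2" using sin finNb unfolding tree_degree_def by simp
    then obtain u w where uw: "{y\<in>N. T t y} - {s} = {u, w}" "u \<noteq> w" by (auto simp: card_2_iff)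
    have nb3: "{y\<in>N. T t y} = {s, u, w}" using uw(1) sin by blast
    have us: "u \<noteq> s" "w \<noteq> s" using uw(1) by blast+
    have tu: "T t u" "T t w" using nb3 by blast+
    have sm: "3 * card (A z t) < n" if z: "z \<in> {u, w}" for z
    proof -
      have tz: "T t z" using z tu by auto
      have zs: "z \<noteq> s" using z us by auto
      have "(t, z) \<notin> D"
      proof
        assume tzD: "(t, z) \<in> D"
        have "NS s t \<subseteq> NS t z" unfolding NS_def using grow[OF tree st tz zs] by auto
        moreover have "t \<in> NS t z" unfolding NS_def using tN by simp
        moreover have "t \<notin> NS s t" unfolding NS_def using bridge[OF tree st] by simp
        ultimately have "NS s t \<subset> NS t z" by blast
        hence "card (NS s t) < card (NS t z)" by (rule psubset_card_mono[rotated]) (simp add: NS_def finN)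
        thus False using maxi[OF tzD] by simp
      qed
      hence "\<not> 3 * card (A t z) < n" using tz unfolding D_def by simp
      thus ?thesis using unb[OF tz] by simp
    qed
    have "A t s \<subseteq> A u t \<union> A w t"
    proof
      fix v assume v: "v \<in> A t s"
      hence vV: "v \<in> V" and p: "(del T s t)\<^sup>*\<^sup>* t (L v)" unfolding Ats by auto
      have "L v \<noteq> t" using Lleaf[OF vV] d3 unfolding tree_leaves_def by auto
      thus "v \<in> A u t \<union> A w t" using split3[OF tree st nb3 p] vV unfolding A_def edge_side_del by auto
    qed
    hence "card (A t s) \<le> card (A u t \<union> A w t)"
      by (rule card_mono[rotated]) (use AV finV finite_subset in blast)
    also have "\<dots> \<le> card (A u t) + card (A w t)" by (rule card_Un_le)
    finally show False using sm[of u] sm[of w] ccompl[OF st] small cA[of s t] by simp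
  qed
qed



lemma rd_two:
  assumes "a \<noteq> b"
  shows "\<exists>N T L. rank_decomposition {a, b} N T L"
proof -
  define T :: "nat \<Rightarrow> nat \<Rightarrow> bool" where "T x y = ((x = 0 \<and> y = 1) \<or> (x = 1 \<and> y = 0))" for x y
  define L where "L z = (if z = a then 0 else 1::nat)" for z
  have te: "tree_edges {0,1} T = {{0,1}}" unfolding tree_edges_def T_def by auto
  have conn: "T\<^sup>*\<^sup>* s t" if "s \<in> {0,1}" "t \<in> {0,1}" for s t
  proof -
    have "T 0 1" "T 1 0" unfolding T_def by auto
    thus ?thesis using that by auto
  qed
  have tree: "is_tree {0,1} T" unfolding is_tree_def using te conn by (auto simp: T_def)
  have d: "tree_degree {0,1} T s = 1" if "s \<in> {0,1}" for s
  proof -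
    have "{t\<in>{0,1}. T s t} = {1 - s}" using that unfolding T_def by auto
    thus ?thesis unfolding tree_degree_def by simp
  qed
  have lv: "tree_leaves {0,1} T = {0,1}" unfolding tree_leaves_def using d by auto
  have "bij_betw L {a, b} {0,1}" unfolding bij_betw_def inj_on_def L_def using assms by auto
  hence "rank_decomposition {a, b} {0,1} T L"
    unfolding rank_decomposition_def using tree d lv by auto
  thus ?thesis by blast
qed

lemma rd_extend:
  assumes rd: "rank_decomposition V0 N T L" and aV: "a \<in> V0" and v: "v \<notin> V0"
  shows "\<exists>N T L. rank_decomposition (insert v V0) N T L"
proof -
  have tree: "is_tree N T" using rd unfolding rank_decomposition_def by blast
  have finN: "finite N" and neN: "N \<noteq> {}" using tree unfolding is_tree_def by auto
  have deg: "\<forall>s\<in>N. tree_degree N T s \<in> {1, 3}" using rd unfolding rank_decomposition_def by blast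
  have bij: "bij_betw L V0 (tree_leaves N T)" using rd unfolding rank_decomposition_def by blast
  define l where "l = L a"
  have lleaf: "l \<in> tree_leaves N T" unfolding l_def using bij aV by (auto simp: bij_betw_def)
  hence lN: "l \<in> N" and ldeg: "card {y\<in>N. T l y} = 1" unfolding tree_leaves_def tree_degree_def by auto
  define p where "p = Suc (Max N)"
  define q where "q = Suc (Suc (Max N))"
  have pN: "p \<notin> N" "q \<notin> N" "p \<noteq> q" "p \<noteq> l" "q \<noteq> l"
    using Max_ge[OF finN] lN unfolding p_def q_def by force+
  define N' where "N' = N \<union> {p, q}"
  define T' where "T' x y = (T x y \<or> (x = l \<and> y = p) \<or> (x = p \<and> y = l) \<or> (x = l \<and> y = q) \<or> (x = q \<and> y = l))" for x y
  define L' where "L' = L(a := p, v := q)"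
  have TN: "T x y \<Longrightarrow> x \<in> N \<and> y \<in> N" for x y using tree_inN[OF tree] by blast
  have finN': "finite N'" unfolding N'_def using finN by simp
  have cardN': "card N' = card N + 2" unfolding N'_def using finN pN by simp
  have conn_l: "T'\<^sup>*\<^sup>* x l \<and> T'\<^sup>*\<^sup>* l x" if "x \<in> N'" for x
  proof (cases "x \<in> N")
    case True
    have mono: "T\<^sup>*\<^sup>* y z \<Longrightarrow> T'\<^sup>*\<^sup>* y z" for y z
      by (rule rtranclp_mono[THEN predicate2D, of T T']) (auto simp: T'_def)
    show ?thesis using mono tree_conn[OF tree True lN] tree_conn[OF tree lN True] by blast
  next
    case False
    hence "x = p \<or> x = q" using that unfolding N'_def by auto
    hence "T' x l \<and> T' l x" unfolding T'_def by auto
    thus ?thesis by auto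
  qed
  have te: "tree_edges N' T' = tree_edges N T \<union> {{l, p}, {l, q}}"
    unfolding tree_edges_def N'_def T'_def using TN lN by blast
  have new: "{l, p} \<notin> tree_edges N T" "{l, q} \<notin> tree_edges N T" "{l, p} \<noteq> {l, q}"
    unfolding tree_edges_def using TN pN by (auto simp: doubleton_eq_iff)
  have cte: "card (tree_edges N' T') = card (tree_edges N T) + 2"
    unfolding te using new finite_tree_edges[OF finN, of T] by simp
  have cN: "card N \<ge> 1" using finN neN by (simp add: Suc_leI card_gt_0_iff)
  have tree': "is_tree N' T'"
    unfolding is_tree_def
  proof (intro conjI allI impI ballI)
    show "finite N'" by (rule finN')
    show "N' \<noteq> {}" unfolding N'_def by simp
    fix s t
    show "T' s t \<Longrightarrow> T' t s" unfolding T'_def using tree_sym[OF tree] by blast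
    show "\<not> T' s s" unfolding T'_def using tree_irr[OF tree] pN by auto
    show "T' s t \<Longrightarrow> s \<in> N'" "T' s t \<Longrightarrow> t \<in> N'" unfolding T'_def N'_def using TN lN by auto
  next
    fix s t assume "s \<in> N'" "t \<in> N'"
    thus "T'\<^sup>*\<^sup>* s t" using conn_l by (meson rtranclp_trans)
  next
    show "card (tree_edges N' T') = card N' - 1"
      using cte cardN' cN tree unfolding is_tree_def by simp
  qed
  have nb_old: "{y\<in>N'. T' x y} = {y\<in>N. T x y}" if "x \<in> N" "x \<noteq> l" for x
    using that pN TN unfolding N'_def T'_def by auto
  have nb_l: "{y\<in>N'. T' l y} = {y\<in>N. T l y} \<union> {p, q}"
    using pN TN lN unfolding N'_def T'_def by auto
  have nb_p: "{y\<in>N'. T' p y} = {l}" "{y\<in>N'. T' q y} = {l}"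
    using pN TN lN unfolding N'_def T'_def by auto
  have deg_l: "tree_degree N' T' l = 3"
  proof -
    have "{y\<in>N. T l y} \<inter> {p, q} = {}" using pN TN by auto
    hence "card ({y\<in>N. T l y} \<union> {p, q}) = card {y\<in>N. T l y} + card {p, q}"
      using finN by (intro card_Un_disjoint) auto
    thus ?thesis unfolding tree_degree_def nb_l using ldeg pN by simp
  qed
  have deg': "\<forall>s\<in>N'. tree_degree N' T' s \<in> {1, 3}"
  proof
    fix s assume s: "s \<in> N'"
    show "tree_degree N' T' s \<in> {1, 3}"
    proof (cases "s \<in> N \<and> s \<noteq> l")
      case True
      thus ?thesis using deg nb_old[of s] unfolding tree_degree_def by simp
    next
      case False
      hence "s = l \<or> s = p \<or> s = q" using s unfolding N'_def by auto
      thus ?thesis using deg_l nb_p unfolding tree_degree_def by auto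
    qed
  qed
  have leaves': "tree_leaves N' T' = (tree_leaves N T - {l}) \<union> {p, q}"
  proof -
    have "tree_leaves N' T' = {s\<in>N'. tree_degree N' T' s = 1}" unfolding tree_leaves_def ..
    also have "\<dots> = {s\<in>N. s \<noteq> l \<and> tree_degree N T s = 1} \<union> {p, q}"
    proof -
      have e: "s \<in> N \<Longrightarrow> s \<noteq> l \<Longrightarrow> tree_degree N' T' s = tree_degree N T s" for s
        using nb_old unfolding tree_degree_def by simp
      have pq: "tree_degree N' T' p = 1" "tree_degree N' T' q = 1"
        using nb_p unfolding tree_degree_def by simp_all
      have "s \<in> N' \<and> tree_degree N' T' s = 1 \<longleftrightarrow> (s \<in> N \<and> s \<noteq> l \<and> tree_degree N T s = 1) \<or> s \<in> {p, q}" for s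
      proof (cases "s = l")
        case sl: True
        have "\<not> tree_degree N' T' s = 1" using deg_l sl by simp
        moreover have "s \<notin> {p, q}" using sl pN by auto
        ultimately show ?thesis using sl by blast
      next
        case snl: False
        show ?thesis
        proof (cases "s \<in> N")
          case sN: True
          have "tree_degree N' T' s = tree_degree N T s" using e[OF sN snl] .
          moreover have "s \<in> N'" "s \<notin> {p, q}" using sN pN unfolding N'_def by auto
          ultimately show ?thesis using sN snl by auto
        next
          case F2: False thus ?thesis using pq unfolding N'_def by auto
        qed
      qed
      thus ?thesis by blast
    qed
    also have "\<dots> = (tree_leaves N T - {l}) \<union> {p, q}" unfolding tree_leaves_def by auto
    finally show ?thesis .
  qed
  have bij': "bij_betw L' (insert v V0) (tree_leaves N' T')"
  proof -
    have b1: "bij_betw L (V0 - {a}) (tree_leaves N T - {l})"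
    proof (rule bij_betw_DiffI[OF bij])
      show "bij_betw L {a} {l}" by (rule bij_betw_singletonI) (simp add: l_def)
      show "{a} \<subseteq> V0" "{l} \<subseteq> tree_leaves N T" using aV lleaf by auto
    qed
    have b1': "bij_betw L' (V0 - {a}) (tree_leaves N T - {l})"
    proof -
      have "\<forall>x\<in>V0 - {a}. L' x = L x" using v unfolding L'_def by auto
      hence "bij_betw L' (V0 - {a}) (tree_leaves N T - {l}) = bij_betw L (V0 - {a}) (tree_leaves N T - {l})"
        by (intro bij_betw_cong) auto
      thus ?thesis using b1 by simp
    qed
    have b2: "bij_betw L' {a, v} {p, q}"
      unfolding bij_betw_def inj_on_def L'_def using aV v pN by auto
    have "bij_betw L' ((V0 - {a}) \<union> {a, v}) ((tree_leaves N T - {l}) \<union> {p, q})"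
      by (rule bij_betw_combine[OF b1' b2]) (use v pN in \<open>auto simp: tree_leaves_def\<close>)
    moreover have "(V0 - {a}) \<union> {a, v} = insert v V0" using aV by auto
    ultimately show ?thesis unfolding leaves' by simp
  qed
  have "rank_decomposition (insert v V0) N' T' L'"
    unfolding rank_decomposition_def using tree' deg' bij' by blast
  thus ?thesis by blast
qed

lemma rd_exists:
  assumes "finite V" "2 \<le> card V"
  shows "\<exists>N T L. rank_decomposition V N T L"
  using assms
proof (induction V rule: finite_induct)
  case empty thus ?case by simp
next
  case (insert v V0)
  show ?case
  proof (cases "2 \<le> card V0")
    case True
    then obtain N T L where rd: "rank_decomposition V0 N T L" using insert by blast
    obtain a where a: "a \<in> V0" using True by fastforce
    show ?thesis by (rule rd_extend[OF rd a insert(2)])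
  next
    case False
    hence "card V0 = 1" using insert by simp
    then obtain a where "V0 = {a}" by (auto simp: card_1_singleton_iff)
    hence "insert v V0 = {v, a}" "v \<noteq> a" using insert(2) by auto
    thus ?thesis using rd_two by metis
  qed
qed



lemma rw_lower:
  assumes finV: "finite V" and n2: "2 \<le> card V"
    and cut: "\<forall>X. X \<subseteq> V \<longrightarrow> card V \<le> 3 * card X \<longrightarrow> card V \<le> 3 * card (V - X) \<longrightarrow> k \<le> cut_rank V E X"
  shows "k \<le> rank_width V E"
proof -
  define Pk where "Pk k' = (\<exists>N T L. rank_decomposition V N T L \<and> decomposition_width V E N T L = k')" for k'
  have ex: "\<exists>k'. Pk k'" unfolding Pk_def using rd_exists[OF finV n2] by blast
  have rw: "rank_width V E = (LEAST k'. Pk k')" unfolding rank_width_def Pk_def using n2 by simp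
  have "Pk (LEAST k'. Pk k')" using ex by (rule LeastI_ex)
  then obtain N T L where rd: "rank_decomposition V N T L"
    and w: "decomposition_width V E N T L = rank_width V E" unfolding Pk_def rw by blast
  obtain s t where st: "T s t" "card V \<le> 3 * card (edge_side V T L s t)"
    "card V \<le> 3 * card (V - edge_side V T L s t)" using balanced[OF rd finV n2] by blast
  have XV: "edge_side V T L s t \<subseteq> V" unfolding edge_side_def by auto
  have k: "k \<le> cut_rank V E (edge_side V T L s t)" using cut XV st by blast
  have tree: "is_tree N T" using rd unfolding rank_decomposition_def by blast
  have finN: "finite N" using tree unfolding is_tree_def by blast
  define S where "S = {cut_rank V E (edge_side V T L s t) | s t. s \<in> N \<and> t \<in> N \<and> T s t}"
  have "S \<subseteq> (\<lambda>(s,t). cut_rank V E (edge_side V T L s t)) ` (N \<times> N)" unfolding S_def by auto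
  hence finS: "finite S" using finN finite_subset by blast
  have "cut_rank V E (edge_side V T L s t) \<in> S" unfolding S_def using st(1) tree_inN[OF tree st(1)] by blast
  hence "cut_rank V E (edge_side V T L s t) \<le> Max ({0} \<union> S)" using finS by simp
  hence "cut_rank V E (edge_side V T L s t) \<le> decomposition_width V E N T L"
    unfolding decomposition_width_def S_def .
  thus ?thesis using k w by simp
qed

lemma card_grid: "card (comp_grid_V m) = m\<^sup>2"
  unfolding comp_grid_V_def by (simp add: card_cartesian_product power2_eq_square)

lemma grid_rw:
  fixes h :: "nat \<times> nat \<Rightarrow> 'a"
  assumes m: "2 \<le> m" and inj: "inj_on h (comp_grid_V m)"
    and EE: "\<forall>p\<in>comp_grid_V m. \<forall>q\<in>comp_grid_V m. E (h p) (h q) = comp_grid_E p q"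
  shows "real m / 4 \<le> real (rank_width (h ` comp_grid_V m) E)"
proof -
  let ?V = "h ` comp_grid_V m"
  have cV: "card ?V = m\<^sup>2" using card_image[OF inj] card_grid by simp
  have finV: "finite ?V" using finite_grid by simp
  have "2 * 2 \<le> m * m" by (rule mult_le_mono[OF m m])
  hence "4 \<le> m\<^sup>2" by (simp add: power2_eq_square)
  hence n2: "2 \<le> card ?V" using cV by simp
  have "(m + 3) div 4 \<le> rank_width ?V E"
  proof (rule rw_lower[OF finV n2], intro allI impI)
    fix X assume X: "X \<subseteq> ?V" "card ?V \<le> 3 * card X" "card ?V \<le> 3 * card (?V - X)"
    have "m \<le> 4 * cut_rank ?V E X"
      by (rule grid_cut[OF inj EE X(1)]) (use X cV in auto)
    thus "(m + 3) div 4 \<le> cut_rank ?V E X" by simp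
  qed
  hence "m \<le> 4 * rank_width ?V E" by simp
  thus ?thesis by simp
qed

lemma circle_transfer:
  assumes cg: "circle_graph V E" and gh: "\<forall>v. g (h v) = v"
  shows "circle_graph (h ` V) (\<lambda>x y. E (g x) (g y))"
proof -
  have sg: "simple_graph V E" using cg unfolding circle_graph_def by blast
  obtain a b :: "_ \<Rightarrow> complex" where
    ab: "\<forall>v\<in>V. norm (a v) = 1 \<and> norm (b v) = 1 \<and> a v \<noteq> b v"
    and inj: "inj_on (\<lambda>v. closed_segment (a v) (b v)) V"
    and ed: "\<forall>v\<in>V. \<forall>w\<in>V. v \<noteq> w \<longrightarrow>
            (E v w \<longleftrightarrow> closed_segment (a v) (b v) \<inter> closed_segment (a w) (b w) \<noteq> {})"
    using cg unfolding circle_graph_def by blast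
  have 1: "simple_graph (h ` V) (\<lambda>x y. E (g x) (g y))" using sg unfolding simple_graph_def by auto
  have 2: "\<forall>x\<in>h ` V. norm (a (g x)) = 1 \<and> norm (b (g x)) = 1 \<and> a (g x) \<noteq> b (g x)" using ab gh by auto
  have 3: "inj_on (\<lambda>x. closed_segment (a (g x)) (b (g x))) (h ` V)"
  proof (rule inj_onI)
    fix x y assume "x \<in> h ` V" "y \<in> h ` V" "closed_segment (a (g x)) (b (g x)) = closed_segment (a (g y)) (b (g y))"
    then obtain v w where vw: "v \<in> V" "w \<in> V" "x = h v" "y = h w"
      "closed_segment (a v) (b v) = closed_segment (a w) (b w)" using gh by auto
    have "v = w" by (rule inj_onD[OF inj vw(5) vw(1,2)])
    thus "x = y" using vw by simp
  qed
  have 4: "\<forall>x\<in>h ` V. \<forall>y\<in>h ` V. x \<noteq> y \<longrightarrow> (E (g x) (g y) \<longleftrightarrow>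
     closed_segment (a (g x)) (b (g x)) \<inter> closed_segment (a (g y)) (b (g y)) \<noteq> {})"
  proof (intro ballI impI)
    fix x y assume xy: "x \<in> h ` V" "y \<in> h ` V" "x \<noteq> y"
    then obtain v w where vw: "v \<in> V" "w \<in> V" "x = h v" "y = h w" by auto
    hence "v \<noteq> w" using xy(3) by auto
    moreover have "g x = v" "g y = w" using vw gh by auto
    ultimately show "E (g x) (g y) \<longleftrightarrow>
     closed_segment (a (g x)) (b (g x)) \<inter> closed_segment (a (g y)) (b (g y)) \<noteq> {}"
      using ed vw(1,2) by simp
  qed
  show ?thesis unfolding circle_graph_def
    apply (rule conjI[OF 1])
    apply (rule exI[of _ "\<lambda>x. a (g x)"], rule exI[of _ "\<lambda>x. b (g x)"])
    using 2 3 4 by (intro conjI)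
qed

theorem mainTheorem10:
  shows "(\<forall>m::nat. m \<ge> 2 \<longrightarrow>
            circle_graph (comp_grid_V m) comp_grid_E \<and>
            card (comp_grid_V m) = m ^ 2 \<and>
            real (rank_width (comp_grid_V m) comp_grid_E) \<ge> real m / 4) \<and>
         \<not> (\<exists>f :: nat \<Rightarrow> real. f \<in> o(\<lambda>n. sqrt (real n)) \<and>
              (\<forall>(V :: nat set) E. circle_graph V E \<longrightarrow> real (rank_width V E) \<le> f (card V)))"
proof (intro conjI allI impI notI)
  fix m :: nat assume m: "2 \<le> m"
  show "circle_graph (comp_grid_V m) comp_grid_E" by (rule grid_circle)
  show "card (comp_grid_V m) = m ^ 2" by (rule card_grid)
  show "real m / 4 \<le> real (rank_width (comp_grid_V m) comp_grid_E)"
    using grid_rw[OF m, of id comp_grid_E] by simp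
next
  assume "\<exists>f :: nat \<Rightarrow> real. f \<in> o(\<lambda>n. sqrt (real n)) \<and>
              (\<forall>(V :: nat set) E. circle_graph V E \<longrightarrow> real (rank_width V E) \<le> f (card V))"
  then obtain f :: "nat \<Rightarrow> real" where fo: "f \<in> o(\<lambda>n. sqrt (real n))"
    and fb: "\<forall>(V :: nat set) E. circle_graph V E \<longrightarrow> real (rank_width V E) \<le> f (card V)" by blast
  have "eventually (\<lambda>n. norm (f n) \<le> (1/8) * norm (sqrt (real n))) at_top"
    using landau_o.smallD[OF fo, of "1/8"] by simp
  then obtain N0 where N0: "\<And>n. n \<ge> N0 \<Longrightarrow> norm (f n) \<le> (1/8) * norm (sqrt (real n))"
    by (auto simp: eventually_at_top_linorder)
  define m where "m = max 2 N0"
  have m2: "2 \<le> m" unfolding m_def by simp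
  define G where "G = comp_grid_V m"
  define E' where "E' x y = comp_grid_E (prod_decode x) (prod_decode y)" for x y
  have cg: "circle_graph (prod_encode ` G) E'"
    unfolding E'_def G_def by (rule circle_transfer[OF grid_circle]) simp
  have inj: "inj_on prod_encode G" by (rule inj_prod_encode)
  have rwb: "real m / 4 \<le> real (rank_width (prod_encode ` G) E')"
    unfolding G_def by (rule grid_rw[OF m2]) (use inj in \<open>auto simp: G_def E'_def\<close>)
  have cV: "card (prod_encode ` G) = m\<^sup>2" using card_image[OF inj] card_grid unfolding G_def by simp
  have "m\<^sup>2 \<ge> N0" unfolding m_def power2_eq_square
    by (metis le_square max.cobounded2 order_trans)
  hence "norm (f (m\<^sup>2)) \<le> (1/8) * norm (sqrt (real (m\<^sup>2)))" by (rule N0)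
  hence "f (m\<^sup>2) \<le> real m / 8" by simp
  moreover have "real (rank_width (prod_encode ` G) E') \<le> f (m\<^sup>2)" using fb cg cV by metis
  ultimately show False using rwb m2 by simp
qed

end
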